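(* Let $V:\mathbb{R}^r\to\mathbb{R}$ satisfy Assumptions A1 and A2 (see context), and let the step size $\delta$ satisfy the step-size condition (S). Let $(\xi_k,\rho_k)_{k\ge0}$ be the underdamped Langevin algorithm with step size $\delta$ started from deterministic $\xi_0,\rho_0\in\mathbb{R}^r$. Then for any fixed $l>0$ there exist constants $C=C(l,\delta)>0$, $\lambda=\lambda(l,\delta)>0$ and an integer $m=m(l)>0$ such that for all $k\ge0$, \[ \mathbb{E}\left(\Vert\xi_{k}\Vert^{2l}+\Vert\rho_{k}\Vert^{2l}\right)\le C\left\{ 1+\left(\Vert\xi_{0}\Vert^{m}+\Vert\rho_{0}\Vert^{m}\right)e^{-\lambda k}\right\}. \]
   Context: Fix integers $r\ge1$ and a constant $\gamma>0$. A map $\phi:\mathbb{R}^a\to\mathbb{R}^b$ has polynomial growth if there are $C>0$ and an integer $m\ge0$ with $\Vert\phi(x)\Vert\le C(1+\Vert x\Vert^m)$ for all $x$; $\mathscr{C}^m_{poly}$ denotes the maps that are $m$ times differentiable such that the map and its derivatives (up to order $m$) have polynomial growth; $\mathscr{C}^\infty_{poly}$ means this holds for all orders. Norms of matrices/tensors are operator norms. Assumption A1: (a) $V(x)\ge0$ for all $x\in\mathbb{R}^r$; (b) $\Vert\nabla^2V(x)\Vert\le\nu$ for some constant $\nu>0$ and all $x$; (c) $V\in\mathscr{C}^\infty_{poly}$. Assumption A2: there exist constants $\alpha>0$ and $0<\beta<1$ such that for all $x\in\mathbb{R}^r$, $\frac12\langle\nabla V(x),x\rangle\ge\beta V(x)+\gamma^2C_\beta\Vert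 x\Vert^2-\alpha$, where $C_\beta=\frac{\beta(2-\beta)}{8(1-\beta)}$. Step-size condition (S): $0<\delta\le\min\{1/\gamma,\ \gamma/(2\nu),\ (D+1-\sqrt{D^2+1})/\gamma\}$ with $D=\gamma^4C_\beta/\nu^2$. Underdamped Langevin algorithm: $\xi_{k+1}=\xi_k+\delta\rho_k$, $\rho_{k+1}=(1-\gamma\delta)\rho_k-\delta\nabla V(\xi_k)+\sqrt{2\gamma\delta}\,\eta_k$, where $\eta_0,\eta_1,\dots$ are i.i.d. $N(0,I_r)$ and $\eta_k$ is independent of $(\xi_j,\rho_j)_{j\le k}$; write $W_k=(\xi_k^{\mathrm T},\rho_k^{\mathrm T})^{\mathrm T}\in\mathbb{R}^{2r}$. *)

theory Defs
  imports "HOL-Probability.Probability"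
begin

definition poly_growth :: "('a::real_normed_vector \<Rightarrow> real) \<Rightarrow> bool" where
  "poly_growth f \<longleftrightarrow> (\<exists>C>0. \<exists>m::nat. \<forall>x. \<bar>f x\<bar> \<le> C * (1 + norm x ^ m))"

text \<open>D m x is the m-th
  Frechet derivative of V at x, viewed as an m-linear form applied to the list of
  m directions; its operator norm is bounded by C(1+|x|^k).\<close>
definition Cinf_poly :: "('a::real_normed_vector \<Rightarrow> real) \<Rightarrow> bool" where
  "Cinf_poly V \<longleftrightarrow> (\<exists>D :: nat \<Rightarrow> 'a \<Rightarrow> 'a list \<Rightarrow> real.
      (\<forall>x. D 0 x [] = V x) \<and>
      (\<forall>m x hs. length hs = m \<longrightarrow>
          ((\<lambda>y. D m y hs) has_derivative (\<lambda>h. D (Suc m) x (h # hs))) (at x)) \<and>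
      (\<forall>m. \<exists>C>0. \<exists>k::nat. \<forall>x hs. length hs = m \<longrightarrow>
          \<bar>D m x hs\<bar> \<le> C * (1 + norm x ^ k) * prod_list (map norm hs)))"

definition C_beta :: "real \<Rightarrow> real" where
  "C_beta \<beta> = \<beta> * (2 - \<beta>) / (8 * (1 - \<beta>))"

definition step_ok :: "real \<Rightarrow> real \<Rightarrow> real \<Rightarrow> real \<Rightarrow> bool" where
  "step_ok \<gamma> \<nu> \<beta> \<delta> \<longleftrightarrow>
     (let D = \<gamma>^4 * C_beta \<beta> / \<nu>^2 in
      0 < \<delta> \<and> \<delta> \<le> 1/\<gamma> \<and> \<delta> \<le> \<gamma> / (2*\<nu>) \<and> \<delta> \<le> (D + 1 - sqrt (D^2 + 1)) / \<gamma>)"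

definition std_gauss_density :: "real^'n \<Rightarrow> real" where
  "std_gauss_density v = (2*pi) powr (- real CARD('n) / 2) * exp (- (norm v ^ 2) / 2)"

primrec ula :: "real \<Rightarrow> real \<Rightarrow> (real^'n \<Rightarrow> real^'n) \<Rightarrow> real^'n \<Rightarrow> real^'n
      \<Rightarrow> (nat \<Rightarrow> 'w \<Rightarrow> real^'n) \<Rightarrow> nat \<Rightarrow> 'w \<Rightarrow> (real^'n) \<times> (real^'n)" where
  "ula \<gamma> \<delta> g x0 p0 \<eta> 0 w = (x0, p0)"
| "ula \<gamma> \<delta> g x0 p0 \<eta> (Suc k) w =
     (let x = fst (ula \<gamma> \<delta> g x0 p0 \<eta> k w); p = snd (ula \<gamma> \<delta> g x0 p0 \<eta> k w) in
      (x + \<delta> *\<^sub>R p,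
       (1 - \<gamma>*\<delta>) *\<^sub>R p - \<delta> *\<^sub>R g x + sqrt (2*\<gamma>*\<delta>) *\<^sub>R \<eta> k w))"

end

theory Submission
  imports Defs
begin

lemma drift_arith:
  fixes Lp L Vx Vx' P X xp gx G gp G0 \<gamma> \<delta> \<nu> \<epsilon> \<eta> Cb \<alpha> :: real
  assumes id: "Lp = Vx' + 1/2*P + \<gamma>/2*xp + \<gamma>^2/4*X + (-\<gamma>*\<delta>/2 + \<gamma>^2*\<delta>^2/4)*P - \<gamma>*\<delta>/2*gx + \<delta>^2/2*G + (-\<delta> + \<gamma>*\<delta>^2/2)*gp"
   and L: "L = Vx + 1/2*P + \<gamma>/2*xp + \<gamma>^2/4*X"
   and h1: "Vx' \<le> Vx + \<delta>*gp + \<nu>/2*\<delta>^2*P"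
   and h2: "\<gamma>*\<delta>/2*gx \<ge> \<gamma>^3*\<delta>*Cb*X - \<gamma>*\<delta>*\<alpha>"
   and h3: "\<gamma>*\<delta>^2/2*gp \<le> \<epsilon>*\<delta>^2/2*G + \<gamma>^2*\<delta>^2/(8*\<epsilon>)*P"
   and h5: "(1+\<epsilon>)*\<delta>^2/2*G \<le> (1+\<epsilon>)*\<delta>^2/2*((1+\<eta>)*\<nu>^2*X + (1+1/\<eta>)*G0)"
  shows "Lp \<le> L - (\<gamma>^3*\<delta>*Cb - (1+\<epsilon>)*(1+\<eta>)*\<delta>^2*\<nu>^2/2) * X
     - (\<gamma>*\<delta>/2 - \<nu>*\<delta>^2/2 - \<gamma>^2*\<delta>^2/4 - \<gamma>^2*\<delta>^2/(8*\<epsilon>)) * P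
     + (\<gamma>*\<delta>*\<alpha> + (1+\<epsilon>)*(1+1/\<eta>)*\<delta>^2*G0/2)"
proof -
  have "(L - (\<gamma>^3*\<delta>*Cb - (1+\<epsilon>)*(1+\<eta>)*\<delta>^2*\<nu>^2/2) * X
     - (\<gamma>*\<delta>/2 - \<nu>*\<delta>^2/2 - \<gamma>^2*\<delta>^2/4 - \<gamma>^2*\<delta>^2/(8*\<epsilon>)) * P
     + (\<gamma>*\<delta>*\<alpha> + (1+\<epsilon>)*(1+1/\<eta>)*\<delta>^2*G0/2)) - Lp
   = (Vx + \<delta>*gp + \<nu>/2*\<delta>^2*P - Vx') + (\<gamma>*\<delta>/2*gx - (\<gamma>^3*\<delta>*Cb*X - \<gamma>*\<delta>*\<alpha>))
     + (\<epsilon>*\<delta>^2/2*G + \<gamma>^2*\<delta>^2/(8*\<epsilon>)*P - \<gamma>*\<delta>^2/2*gp)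
     + ((1+\<epsilon>)*\<delta>^2/2*((1+\<eta>)*\<nu>^2*X + (1+1/\<eta>)*G0) - (1+\<epsilon>)*\<delta>^2/2*G)"
    unfolding id L by (simp add: algebra_simps add_divide_distrib diff_divide_distrib)
  moreover have "(Vx + \<delta>*gp + \<nu>/2*\<delta>^2*P - Vx') + (\<gamma>*\<delta>/2*gx - (\<gamma>^3*\<delta>*Cb*X - \<gamma>*\<delta>*\<alpha>))
     + (\<epsilon>*\<delta>^2/2*G + \<gamma>^2*\<delta>^2/(8*\<epsilon>)*P - \<gamma>*\<delta>^2/2*gp)
     + ((1+\<epsilon>)*\<delta>^2/2*((1+\<eta>)*\<nu>^2*X + (1+1/\<eta>)*G0) - (1+\<epsilon>)*\<delta>^2/2*G) \<ge> 0"
    using h1 h2 h3 h5 by linarith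
  ultimately show ?thesis by linarith
qed

locale ulaL =
  fixes V :: "real^'n \<Rightarrow> real" and gradV :: "real^'n \<Rightarrow> real^'n"
    and H :: "real^'n \<Rightarrow> real^'n \<Rightarrow> real^'n"
    and \<gamma> \<nu> \<alpha> \<beta> :: real
  assumes gamma_pos: "\<gamma> > 0"
    and grad: "\<And>x. (V has_derivative (\<lambda>h. gradV x \<bullet> h)) (at x)"
    and hess: "\<And>x. (gradV has_derivative H x) (at x)"
    and A1a: "\<And>x. V x \<ge> 0"
    and nu_pos: "\<nu> > 0"
    and A1b: "\<And>x. onorm (H x) \<le> \<nu>"
    and beta: "0 < \<beta>" "\<beta> < 1"
    and A2: "\<And>x. (1/2) * (gradV x \<bullet> x) \<ge> \<beta> * V x + \<gamma>^2 * C_beta \<beta> * (norm x)^2 - \<alpha>"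
begin

lemma lip: "norm (gradV y - gradV x) \<le> \<nu> * norm (y - x)"
  using differentiable_bound[of UNIV gradV H \<nu> y x] hess A1b by auto

lemma descent: "V (x + h) \<le> V x + gradV x \<bullet> h + \<nu>/2 * (h \<bullet> h)"
proof -
  define \<phi> where "\<phi> t = V (x + t *\<^sub>R h) - t * (gradV x \<bullet> h) - \<nu>/2 * t^2 * (h \<bullet> h)" for t
  define \<phi>' where "\<phi>' t = gradV (x + t *\<^sub>R h) \<bullet> h - gradV x \<bullet> h - \<nu> * t * (h \<bullet> h)" for t
  have d: "(\<phi> has_real_derivative \<phi>' t) (at t)" for t
  proof -
    have l: "((\<lambda>t. x + t *\<^sub>R h) has_derivative (\<lambda>s. s *\<^sub>R h)) (at t)"
      by (auto intro!: derivative_eq_intros)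
    have hd: "((\<lambda>t. V (x + t *\<^sub>R h)) has_derivative (\<lambda>s. gradV (x + t *\<^sub>R h) \<bullet> (s *\<^sub>R h))) (at t)"
      using has_derivative_compose[OF l grad] by simp
    then have "((\<lambda>t. V (x + t *\<^sub>R h)) has_real_derivative (gradV (x + t *\<^sub>R h) \<bullet> h)) (at t)"
    proof -
      have e: "(\<lambda>s. s * (gradV (x + t *\<^sub>R h) \<bullet> h)) = (*) (gradV (x + t *\<^sub>R h) \<bullet> h)"
        by (auto simp: fun_eq_iff)
      show ?thesis using hd unfolding has_field_derivative_def by (simp add: e)
    qed
    then show ?thesis unfolding \<phi>_def \<phi>'_def
      by (auto intro!: derivative_eq_intros simp: power2_eq_square algebra_simps)
  qed
  have "\<phi> 1 \<le> \<phi> 0"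
  proof -
    obtain z where z: "0 < z" "z < 1" "\<phi> 1 - \<phi> 0 = (1 - 0) * \<phi>' z"
      using MVT2[of 0 1 \<phi> \<phi>'] d by auto
    have "(gradV (x + z *\<^sub>R h) - gradV x) \<bullet> h \<le> norm (gradV (x + z *\<^sub>R h) - gradV x) * norm h"
      by (rule norm_cauchy_schwarz)
    also have "\<dots> \<le> \<nu> * norm (z *\<^sub>R h) * norm h"
      using lip[of "x + z *\<^sub>R h" x] by (auto intro: mult_right_mono)
    also have "\<dots> = \<nu> * z * (h \<bullet> h)" using z by (simp add: power2_norm_eq_inner[symmetric] power2_eq_square)
    finally have "\<phi>' z \<le> 0" unfolding \<phi>'_def by (simp add: inner_diff_left)
    with z show ?thesis by simp
  qed
  then show ?thesis unfolding \<phi>_def by simp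
qed

lemma g_bound: "norm (gradV x) \<le> norm (gradV 0) + \<nu> * norm x"
  using lip[of x 0] norm_triangle_ineq2[of "gradV x" "gradV 0"] by simp

lemma V_bound: "V x \<le> V 0 + norm (gradV 0) * norm x + \<nu>/2 * (x \<bullet> x)"
  using descent[of 0 x] norm_cauchy_schwarz[of "gradV 0" x] by simp

end

context ulaL begin

definition Lf where "Lf x p = V x + 1/2*(p \<bullet> p) + \<gamma>/2*(x \<bullet> p) + \<gamma>^2/4*(x \<bullet> x)"

lemma drift_id:
  "Lf (x + \<delta> *\<^sub>R p) ((1 - \<gamma>*\<delta>) *\<^sub>R p - \<delta> *\<^sub>R gradV x) =
    V (x + \<delta> *\<^sub>R p) + 1/2*(p \<bullet> p) + \<gamma>/2*(x \<bullet> p) + \<gamma>^2/4*(x \<bullet> x)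
    + (-\<gamma>*\<delta>/2 + \<gamma>^2*\<delta>^2/4)*(p \<bullet> p) - \<gamma>*\<delta>/2*(gradV x \<bullet> x)
    + \<delta>^2/2*(gradV x \<bullet> gradV x) + (-\<delta> + \<gamma>*\<delta>^2/2)*(gradV x \<bullet> p)"
  unfolding Lf_def
  by (simp add: inner_add_left inner_add_right inner_diff_left inner_diff_right
       inner_commute power2_eq_square algebra_simps)

lemma drift:
  assumes d: "\<delta> > 0" and e: "\<epsilon> > 0" and et: "\<eta> > 0"
  shows "Lf (x + \<delta> *\<^sub>R p) ((1 - \<gamma>*\<delta>) *\<^sub>R p - \<delta> *\<^sub>R gradV x) \<le> Lf x p
     - (\<gamma>^3*\<delta>*C_beta \<beta> - (1+\<epsilon>)*(1+\<eta>)*\<delta>^2*\<nu>^2/2) * (x \<bullet> x)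
     - (\<gamma>*\<delta>/2 - \<nu>*\<delta>^2/2 - \<gamma>^2*\<delta>^2/4 - \<gamma>^2*\<delta>^2/(8*\<epsilon>)) * (p \<bullet> p)
     + (\<gamma>*\<delta>*\<alpha> + (1+\<epsilon>)*(1+1/\<eta>)*\<delta>^2*(norm (gradV 0))^2/2)"
proof -
  define G where "G = gradV x \<bullet> gradV x"
  define P where "P = p \<bullet> p"
  define X where "X = x \<bullet> x"
  define gp where "gp = gradV x \<bullet> p"
  define gx where "gx = gradV x \<bullet> x"
  define G0 where "G0 = (norm (gradV 0))^2"
  have 1: "V (x + \<delta> *\<^sub>R p) \<le> V x + \<delta> * gp + \<nu>/2*\<delta>^2 * P"
    using descent[of x "\<delta> *\<^sub>R p"] by (simp add: gp_def P_def power2_eq_square)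
  have 2: "\<gamma>*\<delta>/2 * gx \<ge> \<gamma>^3*\<delta>*C_beta \<beta> * X - \<gamma>*\<delta>*\<alpha>"
  proof -
    have "gx \<ge> 2*\<gamma>^2*C_beta \<beta>*X - 2*\<alpha>"
    proof -
      have "\<beta> * V x \<ge> 0" using beta A1a[of x] by simp
      then show ?thesis using A2[of x] unfolding gx_def X_def power2_norm_eq_inner by linarith
    qed
    from mult_left_mono[OF this, of "\<gamma>*\<delta>/2"] gamma_pos d show ?thesis
      by (simp add: algebra_simps power3_eq_cube power2_eq_square)
  qed
  have 3: "\<gamma>*\<delta>^2/2 * gp \<le> \<epsilon>*\<delta>^2/2 * G + \<gamma>^2*\<delta>^2/(8*\<epsilon>) * P"
  proof -
    have "0 \<le> ((2*\<epsilon>) *\<^sub>R gradV x - \<gamma> *\<^sub>R p) \<bullet> ((2*\<epsilon>) *\<^sub>R gradV x - \<gamma> *\<^sub>R p)" by simp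
    then have "4*\<epsilon>*\<gamma>*gp \<le> 4*\<epsilon>^2*G + \<gamma>^2*P"
      unfolding gp_def G_def P_def
      by (simp add: inner_diff_left inner_diff_right inner_commute power2_eq_square algebra_simps)
    then have "\<gamma>*gp \<le> \<epsilon>*G + \<gamma>^2/(4*\<epsilon>)*P" using e
      by (simp add: field_simps power2_eq_square)
    from mult_left_mono[OF this, of "\<delta>^2/2"] e show ?thesis
      by (simp add: field_simps power2_eq_square)
  qed
  have 4: "G \<le> (1+\<eta>)*\<nu>^2*X + (1+1/\<eta>)*G0"
  proof -
    have a: "norm (gradV x) \<le> norm (gradV 0) + \<nu> * norm x" by (rule g_bound)
    have "G = (norm (gradV x))^2" by (simp add: G_def power2_norm_eq_inner)
    also have "\<dots> \<le> (norm (gradV 0) + \<nu> * norm x)^2"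
      using a by (simp add: power_mono)
    also have "\<dots> \<le> (1+\<eta>)*(\<nu> * norm x)^2 + (1+1/\<eta>)*(norm (gradV 0))^2"
    proof -
      have "0 \<le> (\<eta> * (\<nu> * norm x) - norm (gradV 0))^2" by simp
      then have "2*\<eta>*(\<nu> * norm x)*norm (gradV 0) \<le> \<eta>^2*(\<nu> * norm x)^2 + (norm (gradV 0))^2"
        by (simp add: power2_eq_square algebra_simps)
      then have "2*(\<nu> * norm x)*norm (gradV 0) \<le> \<eta>*(\<nu> * norm x)^2 + (1/\<eta>)*(norm (gradV 0))^2"
        using et by (simp add: field_simps power2_eq_square)
      then show ?thesis by (simp add: power2_eq_square algebra_simps)
    qed
    finally show ?thesis
      by (simp add: X_def G0_def power2_norm_eq_inner power_mult_distrib algebra_simps)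
  qed
  have 5: "(1+\<epsilon>)*\<delta>^2/2 * G \<le> (1+\<epsilon>)*\<delta>^2/2 * ((1+\<eta>)*\<nu>^2*X + (1+1/\<eta>)*G0)"
    using mult_left_mono[OF 4, of "(1+\<epsilon>)*\<delta>^2/2"] e by simp
  have id: "Lf (x + \<delta> *\<^sub>R p) ((1 - \<gamma>*\<delta>) *\<^sub>R p - \<delta> *\<^sub>R gradV x) =
    V (x + \<delta> *\<^sub>R p) + 1/2*P + \<gamma>/2*(x \<bullet> p) + \<gamma>^2/4*X
    + (-\<gamma>*\<delta>/2 + \<gamma>^2*\<delta>^2/4)*P - \<gamma>*\<delta>/2*gx
    + \<delta>^2/2*G + (-\<delta> + \<gamma>*\<delta>^2/2)*gp"
    unfolding drift_id P_def X_def gx_def G_def gp_def by simp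
  have L: "Lf x p = V x + 1/2*P + \<gamma>/2*(x \<bullet> p) + \<gamma>^2/4*X"
    by (simp add: Lf_def P_def X_def)
  show ?thesis
    unfolding P_def[symmetric] X_def[symmetric] G0_def[symmetric]
    by (rule drift_arith[OF id L 1 2 3 5])
qed

end

lemma Cb_pos: "0 < \<beta> \<Longrightarrow> \<beta> < 1 \<Longrightarrow> C_beta \<beta> > 0"
  unfolding C_beta_def by (auto intro!: divide_pos_pos mult_pos_pos)

lemma params:
  fixes \<gamma> \<nu> \<beta> \<delta> :: real
  assumes g: "\<gamma> > 0" and n: "\<nu> > 0" and b: "0 < \<beta>" "\<beta> < 1" and ok: "step_ok \<gamma> \<nu> \<beta> \<delta>"
  shows "\<exists>\<epsilon>>0. \<exists>\<eta>>0. \<gamma>^3*\<delta>*C_beta \<beta> - (1+\<epsilon>)*(1+\<eta>)*\<delta>^2*\<nu>^2/2 > 0 \<and>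
            \<gamma>*\<delta>/2 - \<nu>*\<delta>^2/2 - \<gamma>^2*\<delta>^2/4 - \<gamma>^2*\<delta>^2/(8*\<epsilon>) > 0"
proof -
  define Cb where "Cb = C_beta \<beta>"
  have Cb: "Cb > 0" using Cb_pos b by (simp add: Cb_def)
  define D where "D = \<gamma>^4 * Cb / \<nu>^2"
  have D: "D > 0" using g n Cb by (simp add: D_def)
  define S where "S = sqrt (D^2 + 1)"
  define t where "t = D + 1 - S"
  have d: "0 < \<delta>" "\<delta> \<le> 1/\<gamma>" "\<delta> \<le> \<gamma> / (2*\<nu>)" "\<delta> \<le> t / \<gamma>"
    using ok unfolding step_ok_def Let_def t_def S_def D_def Cb_def by auto
  have S2: "S^2 = D^2 + 1" unfolding S_def by simp
  have S0: "S \<ge> 0" unfolding S_def by simp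
  have SD: "S > D"
  proof -
    have "sqrt (D^2) < S" unfolding S_def by (rule real_sqrt_less_mono) simp
    then show ?thesis using D by simp
  qed
  have SD1: "S < D + 1"
  proof -
    have "S < sqrt ((D+1)^2)" unfolding S_def using D
      by (intro real_sqrt_less_mono) (simp add: power2_eq_square algebra_simps)
    then show ?thesis using D by simp
  qed
  have t0: "0 < t" "t < 1" using SD SD1 by (auto simp: t_def)
  have quad: "t^2 = 2*(D+1)*t - 2*D"
    unfolding t_def using S2 by (simp add: power2_eq_square algebra_simps)
  have s: "\<gamma>*\<delta> \<le> t" using d(4) g by (simp add: field_simps)
  have nd: "\<nu>*\<delta> \<le> \<gamma>/2" using d(3) n by (simp add: field_simps)
  define e0 where "e0 = t / (2*(1-t))"
  define e1 where "e1 = 2*D/t - 1"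
  have e01: "e0 < e1"
  proof -
    have q2: "t^2 = 2*D*t + 2*t - 2*D" using quad by (simp add: algebra_simps)
    have ee: "t*(2-t) - 4*D*(1-t) + 2*D*(1-t) = 2*t - t^2 + 2*D*t - 2*D"
      by (simp add: algebra_simps power2_eq_square)
    have pp: "2*D*(1-t) > 0" using D t0 by simp
    have "t*(2-t) < 4*D*(1-t)" using ee q2 pp by linarith
    then have num: "t*t < (2*D - t)*(2*(1-t))" by (simp add: algebra_simps)
    have "e0 = (t*t) / (2*t*(1-t))" using t0 unfolding e0_def by (simp add: field_simps)
    moreover have "e1 = ((2*D - t)*(2*(1-t))) / (2*t*(1-t))" using t0 unfolding e1_def
      by (simp add: field_simps)
    moreover have "(t*t) / (2*t*(1-t)) < ((2*D - t)*(2*(1-t))) / (2*t*(1-t))"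
      using num t0 by (intro divide_strict_right_mono) auto
    ultimately show ?thesis by simp
  qed
  have e0p: "e0 > 0" using t0 by (simp add: e0_def)
  define \<epsilon> where "\<epsilon> = (e0 + e1)/2"
  have ep: "\<epsilon> > 0" "\<epsilon> > e0" "\<epsilon> < e1" using e01 e0p by (auto simp: \<epsilon>_def)
  have et: "(1+\<epsilon>)*t < 2*D" using ep(3) t0 unfolding e1_def by (simp add: field_simps)
  define \<eta> where "\<eta> = (2*D/((1+\<epsilon>)*t) - 1)/2"
  have etp: "\<eta> > 0"
  proof -
    have pos: "(1+\<epsilon>)*t > 0" using ep t0 by simp
    have "1 < 2*D/((1+\<epsilon>)*t)" using et pos by (simp add: less_divide_eq)
    then show ?thesis by (simp add: \<eta>_def)
  qed
  have eta2: "(1+\<epsilon>)*(1+\<eta>)*t < 2*D"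
  proof -
    define a where "a = (1+\<epsilon>)*t"
    have nz: "a \<noteq> 0" using ep t0 by (simp add: a_def)
    have c: "a * (2*D/a) = 2*D" using nz by simp
    have "(1+\<epsilon>)*(1+\<eta>)*t = a*(1+\<eta>)" by (simp add: a_def algebra_simps)
    also have "\<dots> = (a * (2*D/a) + a)/2" unfolding \<eta>_def a_def[symmetric] by (simp add: algebra_simps add_divide_distrib diff_divide_distrib)
    also have "\<dots> = (2*D + (1+\<epsilon>)*t)/2" using c by (simp add: a_def)
    finally have "(1+\<epsilon>)*(1+\<eta>)*t = (2*D + (1+\<epsilon>)*t)/2" .
    then show ?thesis using et by simp
  qed
  have c1: "\<gamma>^3*\<delta>*Cb - (1+\<epsilon>)*(1+\<eta>)*\<delta>^2*\<nu>^2/2 > 0"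
  proof -
    have g3: "\<gamma>^3*Cb = D*\<nu>^2/\<gamma>" using g n unfolding D_def by (simp add: field_simps power_numeral_reduce)
    have "\<delta>*\<nu>^2 \<le> t*\<nu>^2/\<gamma>" using s g n by (simp add: field_simps)
    then have "(1+\<epsilon>)*(1+\<eta>)*(\<delta>*\<nu>^2) \<le> (1+\<epsilon>)*(1+\<eta>)*(t*\<nu>^2/\<gamma>)"
      using ep etp by (intro mult_left_mono) auto
    also have "\<dots> = ((1+\<epsilon>)*(1+\<eta>)*t)*\<nu>^2/\<gamma>" by simp
    also have "\<dots> < 2*D*\<nu>^2/\<gamma>" using eta2 g n by (intro divide_strict_right_mono mult_strict_right_mono) auto
    finally have "(1+\<epsilon>)*(1+\<eta>)*\<delta>*\<nu>^2/2 < \<gamma>^3*Cb" using g3 by (simp add: field_simps)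
    from mult_strict_left_mono[OF this, of \<delta>] d(1) show ?thesis by (simp add: algebra_simps power2_eq_square)
  qed
  have c2: "\<gamma>*\<delta>/2 - \<nu>*\<delta>^2/2 - \<gamma>^2*\<delta>^2/4 - \<gamma>^2*\<delta>^2/(8*\<epsilon>) > 0"
  proof -
    have a1: "\<nu>*\<delta>^2/2 \<le> \<gamma>*\<delta>/4" using nd d(1) mult_right_mono[OF nd, of \<delta>]
      by (simp add: power2_eq_square algebra_simps)
    have a2: "\<gamma>^2*\<delta>^2 \<le> t*(\<gamma>*\<delta>)" using mult_right_mono[OF s, of "\<gamma>*\<delta>"] g d(1)
      by (simp add: power2_eq_square algebra_simps)
    have a3: "\<gamma>^2*\<delta>^2/(8*\<epsilon>) \<le> t*(\<gamma>*\<delta>)/(8*\<epsilon>)" using a2 ep by (intro divide_right_mono) auto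
    have a4: "t/(8*\<epsilon>) < (1-t)/4"
    proof -
      have "t < 2*\<epsilon>*(1-t)" using ep(2) t0 unfolding e0_def by (simp add: field_simps)
      then show ?thesis using ep by (simp add: field_simps)
    qed
    have a5: "0 < (\<gamma>*\<delta>) * ((1-t)/4 - t/(8*\<epsilon>))" using a4 g d(1) by simp
    have "\<gamma>*\<delta>/2 - \<nu>*\<delta>^2/2 - \<gamma>^2*\<delta>^2/4 - \<gamma>^2*\<delta>^2/(8*\<epsilon>) \<ge> (\<gamma>*\<delta>) * ((1-t)/4 - t/(8*\<epsilon>))"
    proof -
      have e5: "(\<gamma>*\<delta>) * ((1-t)/4 - t/(8*\<epsilon>)) = \<gamma>*\<delta>/4 - t*(\<gamma>*\<delta>)/4 - t*(\<gamma>*\<delta>)/(8*\<epsilon>)"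
        by (simp add: algebra_simps diff_divide_distrib)
      show ?thesis using a1 a2 a3 e5 by linarith
    qed
    with a5 show ?thesis by linarith
  qed
  show ?thesis using c1 c2 ep etp unfolding Cb_def by blast
qed

context ulaL begin

lemma Lf_alt: "Lf x p = V x + 1/2*((p + (\<gamma>/2) *\<^sub>R x) \<bullet> (p + (\<gamma>/2) *\<^sub>R x)) + \<gamma>^2/8*(x \<bullet> x)"
  unfolding Lf_def by (simp add: inner_add_left inner_add_right inner_commute power2_eq_square algebra_simps)

lemma Lf_nonneg: "0 \<le> Lf x p"
  unfolding Lf_alt using A1a[of x] by (simp add: add_nonneg_nonneg)

lemma Lf_lowX: "\<gamma>^2/8 * (x \<bullet> x) \<le> Lf x p"
  unfolding Lf_alt using A1a[of x] by (simp add: add_nonneg_nonneg)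

lemma Lf_lowP: "p \<bullet> p \<le> 4 * Lf x p"
proof -
  define w where "w = p + (\<gamma>/2) *\<^sub>R x"
  define v where "v = (\<gamma>/2) *\<^sub>R x"
  have pw: "p = w - v" by (simp add: w_def v_def)
  have "(w - v) \<bullet> (w - v) + (w + v) \<bullet> (w + v) = 2*(w \<bullet> w) + 2*(v \<bullet> v)"
    by (simp add: inner_add_left inner_add_right inner_diff_left inner_diff_right inner_commute)
  moreover have "0 \<le> (w + v) \<bullet> (w + v)" by simp
  moreover have "p \<bullet> p = (w - v) \<bullet> (w - v)" using pw by simp
  ultimately have "p \<bullet> p \<le> 2*(w \<bullet> w) + 2*(v \<bullet> v)" by linarith
  moreover have "v \<bullet> v = \<gamma>^2/4 * (x \<bullet> x)" by (simp add: v_def power2_eq_square)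
  moreover have "Lf x p = V x + 1/2*(w \<bullet> w) + \<gamma>^2/8*(x \<bullet> x)" using Lf_alt w_def by simp
  ultimately show ?thesis using A1a[of x] by linarith
qed

definition "K1 = V 0 + (norm (gradV 0))^2/2"
definition "K2 = 1 + 3*\<gamma>^2/8 + 1/2 + \<nu>/2"

lemma K_pos: "K1 \<ge> 0" "K2 > 0"
  using A1a[of 0] nu_pos unfolding K1_def K2_def by (auto intro!: add_pos_nonneg)

lemma Lf_up: "Lf x p \<le> K1 + K2*(x \<bullet> x) + K2*(p \<bullet> p)"
proof -
  have a: "\<gamma>*(x \<bullet> p) \<le> p \<bullet> p + \<gamma>^2/4*(x \<bullet> x)"
  proof -
    have "0 \<le> (p - (\<gamma>/2) *\<^sub>R x) \<bullet> (p - (\<gamma>/2) *\<^sub>R x)" by simp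
    then show ?thesis by (simp add: inner_diff_left inner_diff_right inner_commute power2_eq_square algebra_simps)
  qed
  have b: "norm (gradV 0) * norm x \<le> (norm (gradV 0))^2/2 + (x \<bullet> x)/2"
  proof -
    have "0 \<le> (norm (gradV 0) - norm x)^2" by simp
    then show ?thesis by (simp add: power2_eq_square algebra_simps power2_norm_eq_inner[symmetric])
  qed
  have c: "V x \<le> V 0 + norm (gradV 0) * norm x + \<nu>/2 * (x \<bullet> x)" by (rule V_bound)
  have d: "0 \<le> p \<bullet> p" "0 \<le> x \<bullet> x" by simp_all
  have e: "\<gamma>^2*(x \<bullet> x) \<ge> 0" by simp
  have f: "K2*(x \<bullet> x) = (x \<bullet> x) + 3*\<gamma>^2/8*(x \<bullet> x) + 1/2*(x \<bullet> x) + \<nu>/2*(x \<bullet> x)"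
    "K2*(p \<bullet> p) = (p \<bullet> p) + 3*\<gamma>^2/8*(p \<bullet> p) + 1/2*(p \<bullet> p) + \<nu>/2*(p \<bullet> p)"
    by (simp_all add: K2_def algebra_simps)
  have g: "0 \<le> 3*\<gamma>^2/8*(p \<bullet> p)" "0 \<le> \<nu>/2*(p \<bullet> p)" using nu_pos by simp_all
  show ?thesis unfolding Lf_def K1_def using a b c d f g by linarith
qed

lemma noise_id: "Lf y (u + s *\<^sub>R z) = Lf y u + s*((u + (\<gamma>/2) *\<^sub>R y) \<bullet> z) + s^2/2*(z \<bullet> z)"
  unfolding Lf_def by (simp add: inner_add_left inner_add_right inner_commute power2_eq_square algebra_simps)

lemma step_contract:
  assumes ok: "step_ok \<gamma> \<nu> \<beta> \<delta>"
  shows "\<exists>q b e. 0 < q \<and> q < 1 \<and> 0 \<le> b \<and> 0 \<le> e \<and> (\<forall>x p z.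
     Lf (x + \<delta> *\<^sub>R p) ((1 - \<gamma>*\<delta>) *\<^sub>R p - \<delta> *\<^sub>R gradV x + s *\<^sub>R z) \<le> q * Lf x p + b + e*(z \<bullet> z))"
proof -
  have d: "\<delta> > 0" using ok unfolding step_ok_def Let_def by auto
  obtain \<epsilon> \<eta> where ep: "\<epsilon> > 0" "\<eta> > 0"
    and c1: "\<gamma>^3*\<delta>*C_beta \<beta> - (1+\<epsilon>)*(1+\<eta>)*\<delta>^2*\<nu>^2/2 > 0"
    and c2: "\<gamma>*\<delta>/2 - \<nu>*\<delta>^2/2 - \<gamma>^2*\<delta>^2/4 - \<gamma>^2*\<delta>^2/(8*\<epsilon>) > 0"
    using params[OF gamma_pos nu_pos beta ok] by blast
  define C1 where "C1 = \<gamma>^3*\<delta>*C_beta \<beta> - (1+\<epsilon>)*(1+\<eta>)*\<delta>^2*\<nu>^2/2"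
  define C2 where "C2 = \<gamma>*\<delta>/2 - \<nu>*\<delta>^2/2 - \<gamma>^2*\<delta>^2/4 - \<gamma>^2*\<delta>^2/(8*\<epsilon>)"
  define C3 where "C3 = \<gamma>*\<delta>*\<alpha> + (1+\<epsilon>)*(1+1/\<eta>)*\<delta>^2*(norm (gradV 0))^2/2"
  have C12: "C1 > 0" "C2 > 0" using c1 c2 by (simp_all add: C1_def C2_def)
  define cm where "cm = min C1 C2"
  have cm: "cm > 0" "cm \<le> C1" "cm \<le> C2" using C12 by (auto simp: cm_def)
  define \<kappa> where "\<kappa> = min (cm/K2) (1/2)"
  have ka: "\<kappa> > 0" "\<kappa> \<le> 1/2" "\<kappa>*K2 \<le> cm" using cm K_pos
    by (auto simp: \<kappa>_def min_def field_simps)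
  define \<theta> where "\<theta> = \<kappa>/2"
  have th: "\<theta> > 0" using ka by (simp add: \<theta>_def)
  define A where "A = \<kappa>*K1 + \<bar>C3\<bar>"
  define q where "q = (1+\<theta>)*(1-\<kappa>)"
  define b where "b = (1+\<theta>)*A"
  define e where "e = s^2/2*(1+1/\<theta>)"
  have qq: "0 < q" "q < 1"
  proof -
    show "0 < q" using ka th by (simp add: q_def)
    have "q = 1 - \<kappa>/2 - \<kappa>^2/2" by (simp add: q_def \<theta>_def field_simps power2_eq_square)
    moreover have "\<kappa>^2 > 0" using ka by simp
    ultimately show "q < 1" using ka by linarith
  qed
  have bb: "0 \<le> b" using th ka K_pos by (simp add: b_def A_def)
  have ee: "0 \<le> e" using th by (simp add: e_def)
  have main: "Lf (x + \<delta> *\<^sub>R p) ((1 - \<gamma>*\<delta>) *\<^sub>R p - \<delta> *\<^sub>R gradV x + s *\<^sub>R z) \<le> q * Lf x p + b + e*(z \<bullet> z)"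
    for x p z
  proof -
    define y where "y = x + \<delta> *\<^sub>R p"
    define u where "u = (1 - \<gamma>*\<delta>) *\<^sub>R p - \<delta> *\<^sub>R gradV x"
    define w where "w = u + (\<gamma>/2) *\<^sub>R y"
    have dr: "Lf y u \<le> Lf x p - C1*(x \<bullet> x) - C2*(p \<bullet> p) + C3"
      using drift[OF d ep] unfolding y_def u_def C1_def C2_def C3_def by simp
    have X: "0 \<le> x \<bullet> x" "0 \<le> p \<bullet> p" by simp_all
    have "C1*(x \<bullet> x) + C2*(p \<bullet> p) \<ge> cm*(x \<bullet> x) + cm*(p \<bullet> p)"
      using cm X by (intro add_mono mult_right_mono) auto
    moreover have "\<kappa>*(Lf x p - K1) \<le> \<kappa>*(K2*(x \<bullet> x) + K2*(p \<bullet> p))"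
      using Lf_up[of x p] ka by (intro mult_left_mono) auto
    moreover have "\<kappa>*(K2*(x \<bullet> x) + K2*(p \<bullet> p)) \<le> cm*(x \<bullet> x) + cm*(p \<bullet> p)"
      using ka X by (simp add: distrib_left) (intro add_mono; simp add: mult.assoc[symmetric] mult_right_mono)
    ultimately have L1: "Lf y u \<le> (1-\<kappa>)*Lf x p + A"
      using dr unfolding A_def by (simp add: algebra_simps)
    have w1: "1/2*(w \<bullet> w) \<le> Lf y u"
      unfolding Lf_alt[of y u] w_def using A1a[of y] by (simp add: add_nonneg_nonneg)
    have w2: "s*(w \<bullet> z) \<le> \<theta>/2*(w \<bullet> w) + s^2/(2*\<theta>)*(z \<bullet> z)"
    proof -
      have "0 \<le> (\<theta> *\<^sub>R w - s *\<^sub>R z) \<bullet> (\<theta> *\<^sub>R w - s *\<^sub>R z)" by simp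
      then have "2*(\<theta>*(s*(w \<bullet> z))) \<le> \<theta>^2*(w \<bullet> w) + s^2*(z \<bullet> z)"
        by (simp add: inner_diff_left inner_diff_right inner_commute power2_eq_square algebra_simps)
      then have "(2*\<theta>)*(s*(w \<bullet> z)) \<le> (2*\<theta>)*(\<theta>/2*(w \<bullet> w) + s^2/(2*\<theta>)*(z \<bullet> z))"
        using th by (simp add: algebra_simps power2_eq_square)
      then show ?thesis using th by (simp add: mult_le_cancel_left_pos)
    qed
    have "Lf y (u + s *\<^sub>R z) = Lf y u + s*(w \<bullet> z) + s^2/2*(z \<bullet> z)"
      unfolding noise_id w_def ..
    also have "\<dots> \<le> Lf y u + \<theta>*Lf y u + s^2/(2*\<theta>)*(z \<bullet> z) + s^2/2*(z \<bullet> z)"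
    proof -
      have "\<theta>*(1/2*(w \<bullet> w)) \<le> \<theta>*Lf y u" using w1 th by (intro mult_left_mono) auto
      moreover have "\<theta>/2*(w \<bullet> w) = \<theta>*(1/2*(w \<bullet> w))" by simp
      ultimately show ?thesis using w2 by linarith
    qed
    also have "\<dots> = (1+\<theta>)*Lf y u + e*(z \<bullet> z)"
      unfolding e_def by (simp add: algebra_simps add_divide_distrib)
    also have "\<dots> \<le> (1+\<theta>)*((1-\<kappa>)*Lf x p + A) + e*(z \<bullet> z)"
      using L1 th by (simp add: mult_left_mono)
    also have "\<dots> = q * Lf x p + b + e*(z \<bullet> z)"
      unfolding q_def b_def by (simp add: algebra_simps)
    finally show ?thesis unfolding y_def u_def by (simp add: algebra_simps)
  qed
  show ?thesis using qq bb ee main by blast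
qed

end

lemma conv_step:
  fixes q L Y :: real
  assumes ev: "even N" and q: "0 < q" "q < 1"
  shows "(q*L + Y)^N \<le> q*L^N + (1-q)*(Y/(1-q))^N"
proof -
  have "((1-(1-q)) *\<^sub>R L + (1-q) *\<^sub>R (Y/(1-q)))^N \<le> (1-(1-q))*L^N + (1-q)*(Y/(1-q))^N"
    using convex_onD[OF convex_power_even[OF ev], of "1-q" L "Y/(1-q)"] q by simp
  moreover have "(1-q)*(Y/(1-q)) = Y" using q by simp
  ultimately show ?thesis by simp
qed

lemma pow3:
  fixes a b c :: real
  assumes "0 \<le> a" "0 \<le> b" "0 \<le> c"
  shows "(a+b+c)^N \<le> 3^N * (a^N + b^N + c^N)"
proof -
  define M where "M = max a (max b c)"
  have "a+b+c \<le> 3*M" unfolding M_def by linarith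
  then have "(a+b+c)^N \<le> (3*M)^N" using assms by (intro power_mono) auto
  also have "\<dots> = 3^N * M^N" by (simp add: power_mult_distrib)
  also have "M^N \<le> a^N + b^N + c^N"
    using assms by (auto simp: M_def max_def)
  then have "3^N * M^N \<le> 3^N * (a^N + b^N + c^N)" by simp
  finally show ?thesis .
qed

lemma gauss_total:
  fixes X :: "'a \<Rightarrow> real^'n"
  assumes P: "prob_space M" and D: "distributed M lborel X (\<lambda>x. ennreal (std_gauss_density x))"
  shows "(\<integral>\<^sup>+ v. ennreal (std_gauss_density v) \<partial>(lborel :: (real^'n) measure)) = 1"
proof -
  have X: "X \<in> measurable M lborel" using D by (rule distributed_measurable)
  have fm: "(\<lambda>x::real^'n. ennreal (std_gauss_density x)) \<in> borel_measurable lborel"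
    using D by (rule distributed_borel_measurable)
  have "emeasure (distr M lborel X) UNIV = emeasure M (space M)"
    using X by (simp add: emeasure_distr)
  also have "\<dots> = 1" using P by (simp add: prob_space.emeasure_space_1)
  finally have "emeasure (density lborel (\<lambda>x::real^'n. ennreal (std_gauss_density x))) UNIV = 1"
    using distributed_distr_eq_density[OF D] by simp
  then show ?thesis using fm by (simp add: emeasure_density)
qed

lemma nn_dist:
  assumes D: "distributed M lborel X (\<lambda>x. ennreal (g x))"
    and h: "h \<in> borel_measurable borel"
  shows "(\<integral>\<^sup>+ w. ennreal (h (X w)) \<partial>M) = (\<integral>\<^sup>+ v. ennreal (g v) * ennreal (h v) \<partial>lborel)"
proof -
  have X: "X \<in> measurable M lborel" using D by (rule distributed_measurable)
  have fm: "(\<lambda>x. ennreal (g x)) \<in> borel_measurable lborel"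
    using D by (rule distributed_borel_measurable)
  have hm: "(\<lambda>v. ennreal (h v)) \<in> borel_measurable lborel" using h by simp
  have "(\<integral>\<^sup>+ w. ennreal (h (X w)) \<partial>M) = (\<integral>\<^sup>+ v. ennreal (h v) \<partial>(distr M lborel X))"
    using X h by (subst nn_integral_distr) auto
  also have "\<dots> = (\<integral>\<^sup>+ v. ennreal (h v) \<partial>(density lborel (\<lambda>x. ennreal (g x))))"
    using distributed_distr_eq_density[OF D] by simp
  also have "\<dots> = (\<integral>\<^sup>+ v. ennreal (g v) * ennreal (h v) \<partial>lborel)"
    using fm hm by (simp add: nn_integral_density)
  finally show ?thesis .
qed

lemma exp_int_fin:
  assumes one: "(\<integral>\<^sup>+ v. ennreal (std_gauss_density v) \<partial>(lborel :: (real^'n) measure)) = 1"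
  shows "(\<integral>\<^sup>+ v. ennreal (exp (-(v \<bullet> v)/4)) \<partial>(lborel :: (real^'n) measure)) < \<infinity>"
proof -
  define c0 :: real where "c0 = (2*pi) powr (- real CARD('n) / 2)"
  have c0: "c0 > 0" by (simp add: c0_def)
  have "(\<integral>\<^sup>+ v. ennreal (std_gauss_density v) \<partial>(lborel :: (real^'n) measure))
      = (\<integral>\<^sup>+ v. ennreal c0 * ennreal (exp (-(v \<bullet> v)/2)) \<partial>(lborel :: (real^'n) measure))"
  proof -
    have "(\<lambda>v::real^'n. ennreal (std_gauss_density v)) = (\<lambda>v. ennreal c0 * ennreal (exp (-(v \<bullet> v)/2)))"
      unfolding std_gauss_density_def c0_def
      by (rule ext) (simp add: power2_norm_eq_inner ennreal_mult)
    then show ?thesis by simp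
  qed
  also have "\<dots> = ennreal c0 * (\<integral>\<^sup>+ v. ennreal (exp (-(v \<bullet> v)/2)) \<partial>(lborel :: (real^'n) measure))"
    by (rule nn_integral_cmult) simp
  finally have "ennreal c0 * (\<integral>\<^sup>+ v. ennreal (exp (-(v \<bullet> v)/2)) \<partial>(lborel :: (real^'n) measure)) = 1"
    using one by simp
  note eq1 = this
  have fin2: "(\<integral>\<^sup>+ v. ennreal (exp (-(v \<bullet> v)/2)) \<partial>(lborel :: (real^'n) measure)) < \<infinity>"
  proof (rule ccontr)
    let ?I = "(\<integral>\<^sup>+ v. ennreal (exp (-(v \<bullet> v)/2)) \<partial>(lborel :: (real^'n) measure))"
    assume "\<not> ?I < \<infinity>"
    then have "?I = \<infinity>" by (simp add: not_less top_unique)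
    then have "ennreal c0 * ?I = \<infinity>" using c0 by (simp add: ennreal_mult_top)
    with eq1 show False by simp
  qed
  define T where "T = (\<lambda>x::real^'n. 0 + sqrt 2 *\<^sub>R x)"
  define c where "c = \<bar>sqrt 2\<bar> ^ DIM(real^'n)"
  have D: "lborel = density (distr lborel borel T) (\<lambda>_. ennreal c)"
    unfolding T_def c_def by (rule lborel_affine) simp
  have Tm: "T \<in> measurable lborel borel" unfolding T_def by simp
  have fm: "(\<lambda>v::real^'n. ennreal (exp (-(v \<bullet> v)/4))) \<in> borel_measurable borel" by measurable
  have "(\<integral>\<^sup>+ v. ennreal (exp (-(v \<bullet> v)/4)) \<partial>(lborel :: (real^'n) measure))
     = (\<integral>\<^sup>+ v. ennreal (exp (-(v \<bullet> v)/4)) \<partial>(density (distr lborel borel T) (\<lambda>_. ennreal c)))"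
    by (rule arg_cong[where f="\<lambda>M. \<integral>\<^sup>+ v. ennreal (exp (-(v \<bullet> v)/4)) \<partial>M", OF D])
  also have "\<dots> = (\<integral>\<^sup>+ v. ennreal c * ennreal (exp (-(v \<bullet> v)/4)) \<partial>(distr lborel borel T))"
    using fm by (subst nn_integral_density) auto
  also have "\<dots> = (\<integral>\<^sup>+ x. ennreal c * ennreal (exp (-(T x \<bullet> T x)/4)) \<partial>(lborel :: (real^'n) measure))"
    using Tm fm by (subst nn_integral_distr) auto
  also have "\<dots> = (\<integral>\<^sup>+ x. ennreal c * ennreal (exp (-(x \<bullet> x)/2)) \<partial>(lborel :: (real^'n) measure))"
  proof -
    have s2: "sqrt 2 * (sqrt 2 * a) = 2*a" for a :: real by (simp add: mult.assoc[symmetric])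
    show ?thesis unfolding T_def by (intro nn_integral_cong) (simp add: s2)
  qed
  also have "\<dots> = ennreal c * (\<integral>\<^sup>+ x. ennreal (exp (-(x \<bullet> x)/2)) \<partial>(lborel :: (real^'n) measure))"
    by (rule nn_integral_cmult) simp
  also have "\<dots> < \<infinity>" using fin2 by (simp add: ennreal_mult_less_top)
  finally show ?thesis .
qed

lemma h_pt:
  fixes q b e r :: real and N :: nat
  assumes N: "N \<ge> 1" and q: "0 < q" "q < 1" and b: "b \<ge> 0" and e: "e \<ge> 0" and r: "r \<ge> 0"
  shows "(1-q)*((b + e*r)/(1-q))^N \<le> (1-q)*((b + 4*N*e + 1)/(1-q))^N * exp (r/4)"
proof -
  define B0 where "B0 = b + 4*N*e + 1"
  have B0: "B0 > 0" using b e by (simp add: B0_def add_nonneg_pos)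
  have Nr: "real N \<ge> 1" using N by simp
  have "b + e*r \<le> B0 * (1 + r/(4*N))"
  proof -
    have "e*r \<le> (B0/(4*N))*r"
    proof (rule mult_right_mono)
      show "e \<le> B0/(4*N)" using Nr b unfolding B0_def by (simp add: field_simps)
    qed (use r in auto)
    moreover have "B0 * (1 + r/(4*N)) = B0 + (B0/(4*N))*r" by (simp add: field_simps)
    moreover have "b \<le> B0" using e Nr by (simp add: B0_def)
    ultimately show ?thesis by linarith
  qed
  also have "\<dots> \<le> B0 * exp (r/(4*N))" using B0 by (intro mult_left_mono) auto
  finally have a: "b + e*r \<le> B0 * exp (r/(4*N))" .
  have "((b + e*r)/(1-q))^N \<le> (B0 * exp (r/(4*N))/(1-q))^N"
    using a b e r q by (intro power_mono divide_right_mono) auto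
  also have "\<dots> = (B0/(1-q))^N * exp (r/(4*N))^N" by (simp add: power_mult_distrib power_divide)
  also have "exp (r/(4*N))^N = exp (r/4)"
    using exp_of_nat_mult[of N "r/(4*N)", symmetric] Nr by simp
  finally have "((b + e*r)/(1-q))^N \<le> (B0/(1-q))^N * exp (r/4)" .
  then show ?thesis using q unfolding B0_def by (simp add: mult.assoc)
qed

lemma h_fin:
  fixes q b e :: real and N :: nat
  assumes one: "(\<integral>\<^sup>+ v. ennreal (std_gauss_density v) \<partial>(lborel :: (real^'n) measure)) = 1"
    and N: "N \<ge> 1" and q: "0 < q" "q < 1" and b: "b \<ge> 0" and e: "e \<ge> 0"
  shows "(\<integral>\<^sup>+ v. ennreal (std_gauss_density v) * ennreal ((1-q)*((b + e*(v \<bullet> v))/(1-q))^N)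
            \<partial>(lborel :: (real^'n) measure)) < \<infinity>"
proof -
  define c0 :: real where "c0 = (2*pi) powr (- real CARD('n) / 2)"
  define Cc where "Cc = c0 * ((1-q)*((b + 4*N*e + 1)/(1-q))^N)"
  have c0: "c0 > 0" by (simp add: c0_def)
  have pt: "ennreal (std_gauss_density v) * ennreal ((1-q)*((b + e*(v \<bullet> v))/(1-q))^N)
      \<le> ennreal Cc * ennreal (exp (-(v \<bullet> v)/4))" for v :: "real^'n"
  proof -
    have g: "std_gauss_density v = c0 * exp (-(v \<bullet> v)/2)"
      unfolding std_gauss_density_def c0_def by (simp add: power2_norm_eq_inner)
    have hp: "(1-q)*((b + e*(v \<bullet> v))/(1-q))^N \<le> (1-q)*((b + 4*N*e + 1)/(1-q))^N * exp ((v \<bullet> v)/4)"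
      by (rule h_pt[OF N q b e]) simp
    have hn: "0 \<le> (1-q)*((b + e*(v \<bullet> v))/(1-q))^N" using q b e by simp
    have "std_gauss_density v * ((1-q)*((b + e*(v \<bullet> v))/(1-q))^N)
       \<le> c0 * exp (-(v \<bullet> v)/2) * ((1-q)*((b + 4*N*e + 1)/(1-q))^N * exp ((v \<bullet> v)/4))"
      unfolding g using hp c0 by (intro mult_left_mono) auto
    also have "\<dots> = Cc * (exp (-(v \<bullet> v)/2) * exp ((v \<bullet> v)/4))" by (simp add: Cc_def algebra_simps)
    also have "exp (-(v \<bullet> v)/2) * exp ((v \<bullet> v)/4) = exp (-(v \<bullet> v)/4)"
      by (simp add: exp_add[symmetric])
    finally have r: "std_gauss_density v * ((1-q)*((b + e*(v \<bullet> v))/(1-q))^N) \<le> Cc * exp (-(v \<bullet> v)/4)" .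
    have gn: "0 \<le> std_gauss_density v" unfolding std_gauss_density_def by simp
    have Ccn: "0 \<le> Cc" using c0 q b e by (simp add: Cc_def)
    show ?thesis using r gn hn Ccn by (simp add: ennreal_mult[symmetric] ennreal_leI)
  qed
  have "(\<integral>\<^sup>+ v. ennreal (std_gauss_density v) * ennreal ((1-q)*((b + e*(v \<bullet> v))/(1-q))^N)
            \<partial>(lborel :: (real^'n) measure)) \<le> (\<integral>\<^sup>+ v. ennreal Cc * ennreal (exp (-(v \<bullet> v)/4)) \<partial>(lborel :: (real^'n) measure))"
    by (intro nn_integral_mono pt)
  also have "\<dots> = ennreal Cc * (\<integral>\<^sup>+ v. ennreal (exp (-(v \<bullet> v)/4)) \<partial>(lborel :: (real^'n) measure))"
    by (rule nn_integral_cmult) simp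
  also have "\<dots> < \<infinity>" using exp_int_fin[OF one] by (simp add: ennreal_mult_less_top)
  finally show ?thesis .
qed

primrec Rseq :: "real \<Rightarrow> real \<Rightarrow> ('v \<Rightarrow> real) \<Rightarrow> (nat \<Rightarrow> 'w \<Rightarrow> 'v) \<Rightarrow> nat \<Rightarrow> 'w \<Rightarrow> real" where
  "Rseq q r0 h \<eta> 0 w = r0"
| "Rseq q r0 h \<eta> (Suc k) w = q * Rseq q r0 h \<eta> k w + h (\<eta> k w)"

lemma Rseq_nonneg: "0 \<le> q \<Longrightarrow> 0 \<le> r0 \<Longrightarrow> (\<And>v. 0 \<le> h v) \<Longrightarrow> 0 \<le> Rseq q r0 h \<eta> k w"
  by (induction k) auto

lemma Rseq_meas:
  assumes "\<And>k. \<eta> k \<in> borel_measurable M" and "h \<in> borel_measurable borel"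
  shows "Rseq q r0 h \<eta> k \<in> borel_measurable M"
proof (induction k)
  case 0 then show ?case by simp
next
  case (Suc k)
  have "(\<lambda>w. h (\<eta> k w)) \<in> borel_measurable M"
    using measurable_comp[OF assms(1)[of k] assms(2)] by (simp add: comp_def)
  then show ?case using Suc by simp
qed

lemma Rseq_int:
  fixes \<eta> :: "nat \<Rightarrow> 'w \<Rightarrow> 'v::euclidean_space"
  assumes P: "prob_space M"
    and m: "\<And>k. \<eta> k \<in> borel_measurable M" and hm: "h \<in> borel_measurable borel"
    and hn: "\<And>v. 0 \<le> h v" and q: "0 < q" "q < 1" and r0: "0 \<le> r0" and gh: "0 \<le> gh"
    and K: "\<And>k. (\<integral>\<^sup>+ w. ennreal (h (\<eta> k w)) \<partial>M) = ennreal gh"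
  shows "(\<integral>\<^sup>+ w. ennreal (Rseq q r0 h \<eta> k w) \<partial>M) \<le> ennreal (q^k * r0 + gh/(1-q))"
proof (induction k)
  case 0
  have "(\<integral>\<^sup>+ w. ennreal (Rseq q r0 h \<eta> 0 w) \<partial>M) = ennreal r0"
    using P by (simp add: prob_space.emeasure_space_1)
  also have "\<dots> \<le> ennreal (q^0 * r0 + gh/(1-q))" using q gh by (intro ennreal_leI) simp
  finally show ?case .
next
  case (Suc k)
  have Rm: "Rseq q r0 h \<eta> k \<in> borel_measurable M" by (rule Rseq_meas[OF m hm])
  have hk: "(\<lambda>w. h (\<eta> k w)) \<in> borel_measurable M"
    using measurable_comp[OF m[of k] hm] by (simp add: comp_def)
  have Rn: "\<And>w. 0 \<le> Rseq q r0 h \<eta> k w" using q r0 hn by (intro Rseq_nonneg) auto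
  have "(\<integral>\<^sup>+ w. ennreal (Rseq q r0 h \<eta> (Suc k) w) \<partial>M)
      = (\<integral>\<^sup>+ w. ennreal q * ennreal (Rseq q r0 h \<eta> k w) + ennreal (h (\<eta> k w)) \<partial>M)"
    using q Rn hn by (intro nn_integral_cong) (simp add: ennreal_plus ennreal_mult)
  also have "\<dots> = ennreal q * (\<integral>\<^sup>+ w. ennreal (Rseq q r0 h \<eta> k w) \<partial>M) + (\<integral>\<^sup>+ w. ennreal (h (\<eta> k w)) \<partial>M)"
    using Rm hk by (simp add: nn_integral_add nn_integral_cmult)
  also have "\<dots> \<le> ennreal q * ennreal (q^k * r0 + gh/(1-q)) + ennreal gh"
    using Suc.IH K by (intro add_mono mult_left_mono) auto
  also have "\<dots> = ennreal (q * (q^k * r0 + gh/(1-q)) + gh)"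
    using q r0 gh by (simp add: ennreal_plus ennreal_mult)
  also have "q * (q^k * r0 + gh/(1-q)) + gh = q^(Suc k) * r0 + gh/(1-q)"
    using q by (simp add: field_simps)
  finally show ?case .
qed

lemma powr_bound:
  fixes r l :: real and N :: nat
  assumes r: "0 \<le> r" and l: "0 < l" "l \<le> real N"
  shows "r powr (2*l) \<le> 1 + r^(2*N)"
proof (cases "r \<le> 1")
  case True
  have "r powr (2*l) \<le> 1" using True r l by (intro powr_le1) auto
  then show ?thesis by (simp add: add_increasing2)
next
  case False
  then have "r powr (2*l) \<le> r powr (2*real N)" using l by (intro powr_mono) auto
  also have "\<dots> = r^(2*N)" using False by (simp add: powr_realpow[symmetric])
  finally show ?thesis by simp
qed

context ulaL begin

lemma path_bound:
  fixes \<eta> :: "nat \<Rightarrow> 'w \<Rightarrow> real^'n"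
  assumes q: "0 < q" "q < 1" and b: "0 \<le> b" and e: "0 \<le> e" and ev: "even N"
    and C: "\<And>x p z. Lf (x + \<delta> *\<^sub>R p) ((1 - \<gamma>*\<delta>) *\<^sub>R p - \<delta> *\<^sub>R gradV x + sqrt (2*\<gamma>*\<delta>) *\<^sub>R z)
                 \<le> q * Lf x p + b + e*(z \<bullet> z)"
  shows "Lf (fst (ula \<gamma> \<delta> gradV x0 p0 \<eta> k w)) (snd (ula \<gamma> \<delta> gradV x0 p0 \<eta> k w)) ^ N
     \<le> Rseq q (Lf x0 p0 ^ N) (\<lambda>v. (1-q)*((b + e*(v \<bullet> v))/(1-q))^N) \<eta> k w"
proof (induction k)
  case 0 then show ?case by simp
next
  case (Suc k)
  define x where "x = fst (ula \<gamma> \<delta> gradV x0 p0 \<eta> k w)"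
  define p where "p = snd (ula \<gamma> \<delta> gradV x0 p0 \<eta> k w)"
  define z where "z = \<eta> k w"
  have u: "ula \<gamma> \<delta> gradV x0 p0 \<eta> (Suc k) w =
     (x + \<delta> *\<^sub>R p, (1 - \<gamma>*\<delta>) *\<^sub>R p - \<delta> *\<^sub>R gradV x + sqrt (2*\<gamma>*\<delta>) *\<^sub>R z)"
    by (simp add: Let_def x_def p_def z_def)
  define Ln where "Ln = Lf (x + \<delta> *\<^sub>R p) ((1 - \<gamma>*\<delta>) *\<^sub>R p - \<delta> *\<^sub>R gradV x + sqrt (2*\<gamma>*\<delta>) *\<^sub>R z)"
  have "Ln ^ N \<le> (q * Lf x p + (b + e*(z \<bullet> z)))^N"
    using C[of x p z] Lf_nonneg unfolding Ln_def by (intro power_mono) (auto simp: add.assoc)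
  also have "\<dots> \<le> q * Lf x p ^ N + (1-q)*((b + e*(z \<bullet> z))/(1-q))^N"
    by (rule conv_step[OF ev q])
  also have "\<dots> \<le> q * Rseq q (Lf x0 p0 ^ N) (\<lambda>v. (1-q)*((b + e*(v \<bullet> v))/(1-q))^N) \<eta> k w
        + (1-q)*((b + e*(z \<bullet> z))/(1-q))^N"
    using Suc.IH q unfolding x_def p_def by (intro add_mono mult_left_mono) auto
  finally show ?case unfolding u Ln_def by (simp add: z_def)
qed

end

theorem theorem1:
  fixes V :: "real^'n \<Rightarrow> real" and gradV :: "real^'n \<Rightarrow> real^'n"
    and H :: "real^'n \<Rightarrow> real^'n \<Rightarrow> real^'n"
    and \<gamma> \<nu> \<alpha> \<beta> :: real
  assumes gamma_pos: "\<gamma> > 0"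
    and grad: "\<And>x. (V has_derivative (\<lambda>h. gradV x \<bullet> h)) (at x)"
    and hess: "\<And>x. (gradV has_derivative H x) (at x)"
    and A1a: "\<And>x. V x \<ge> 0"
    and nu_pos: "\<nu> > 0"
    and A1b: "\<And>x. onorm (H x) \<le> \<nu>"
    and A1c: "Cinf_poly V"
    and alpha_pos: "\<alpha> > 0" and beta: "0 < \<beta>" "\<beta> < 1"
    and A2: "\<And>x. (1/2) * (gradV x \<bullet> x) \<ge> \<beta> * V x + \<gamma>^2 * C_beta \<beta> * (norm x)^2 - \<alpha>"
  shows "\<forall>l::real. l > 0 \<longrightarrow> (\<exists>m::nat. m > 0 \<and>
          (\<forall>\<delta>. step_ok \<gamma> \<nu> \<beta> \<delta> \<longrightarrow>
            (\<exists>C>0. \<exists>lam>0. \<forall>(M :: 'w measure) (\<eta> :: nat \<Rightarrow> 'w \<Rightarrow> real^'n) x0 p0.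
               prob_space M \<longrightarrow>
               prob_space.indep_vars M (\<lambda>_. borel) \<eta> UNIV \<longrightarrow>
               (\<forall>k. distributed M lborel (\<eta> k) (\<lambda>x. ennreal (std_gauss_density x))) \<longrightarrow>
               (\<forall>k::nat.
                  (\<integral>\<^sup>+ w. ennreal (norm (fst (ula \<gamma> \<delta> gradV x0 p0 \<eta> k w)) powr (2*l)
                               + norm (snd (ula \<gamma> \<delta> gradV x0 p0 \<eta> k w)) powr (2*l)) \<partial>M)
                  \<le> ennreal (C * (1 + (norm x0 ^ m + norm p0 ^ m) * exp (- lam * real k)))))))"
proof -
  interpret U: ulaL V gradV H \<gamma> \<nu> \<alpha> \<beta>
    using gamma_pos grad hess A1a nu_pos A1b beta A2 by unfold_locales auto
  show ?thesis
  proof (intro allI impI, goal_cases)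
    case (1 l)
    then have l: "l > 0" by simp
    define N where "N = 2 * nat \<lceil>l\<rceil>"
    have Nev: "even N" by (simp add: N_def)
    have lN: "l \<le> real N"
    proof -
      have "l \<le> real_of_int \<lceil>l\<rceil>" by simp
      also have "\<dots> = real (nat \<lceil>l\<rceil>)" using l by simp
      also have "\<dots> \<le> real N" by (simp add: N_def)
      finally show ?thesis .
    qed
    have N1: "N \<ge> 1" using lN l by (cases N) auto
    show ?case
    proof (intro exI[of _ "2*N"] conjI allI impI)
      show "0 < 2*N" using N1 by simp
      fix \<delta> assume ok: "step_ok \<gamma> \<nu> \<beta> \<delta>"
      obtain q b e where q: "0 < q" "q < 1" and b: "0 \<le> b" and e: "0 \<le> e"
        and Ct: "\<And>x p z. U.Lf (x + \<delta> *\<^sub>R p) ((1 - \<gamma>*\<delta>) *\<^sub>R p - \<delta> *\<^sub>R gradV x + sqrt (2*\<gamma>*\<delta>) *\<^sub>R z)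
                 \<le> q * U.Lf x p + b + e*(z \<bullet> z)"
        using U.step_contract[OF ok, of "sqrt (2*\<gamma>*\<delta>)"] by blast
      define h where "h v = (1-q)*((b + e*(v \<bullet> v))/(1-q))^N" for v :: "real^'n"
      have hn: "\<And>v. 0 \<le> h v" using q b e by (simp add: h_def)
      have hm: "h \<in> borel_measurable borel"
        unfolding h_def by (intro borel_measurable_continuous_onI continuous_intros) (use q in auto)
      show "\<exists>C>0. \<exists>lam>0. \<forall>(M :: 'w measure) (\<eta> :: nat \<Rightarrow> 'w \<Rightarrow> real^'n) x0 p0.
               prob_space M \<longrightarrow>
               prob_space.indep_vars M (\<lambda>_. borel) \<eta> UNIV \<longrightarrow>
               (\<forall>k. distributed M lborel (\<eta> k) (\<lambda>x. ennreal (std_gauss_density x))) \<longrightarrow>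
               (\<forall>k::nat.
                  (\<integral>\<^sup>+ w. ennreal (norm (fst (ula \<gamma> \<delta> gradV x0 p0 \<eta> k w)) powr (2*l)
                               + norm (snd (ula \<gamma> \<delta> gradV x0 p0 \<eta> k w)) powr (2*l)) \<partial>M)
                  \<le> ennreal (C * (1 + (norm x0 ^ (2*N) + norm p0 ^ (2*N)) * exp (- lam * real k))))"
      proof (cases "\<exists>(M0::'w measure) (f::'w \<Rightarrow> real^'n). prob_space M0 \<and>
                       distributed M0 lborel f (\<lambda>x. ennreal (std_gauss_density x))")
        case False
        show ?thesis
        proof (intro exI[of _ "1::real"] conjI allI impI)
          fix M :: "'w measure" and \<eta> :: "nat \<Rightarrow> 'w \<Rightarrow> real^'n"
          assume "prob_space M" and "\<forall>k. distributed M lborel (\<eta> k) (\<lambda>x. ennreal (std_gauss_density x))"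
          then have False using False by blast
          then show "(\<integral>\<^sup>+ w. ennreal (norm (fst (ula \<gamma> \<delta> gradV x0 p0 \<eta> k w)) powr (2*l)
                               + norm (snd (ula \<gamma> \<delta> gradV x0 p0 \<eta> k w)) powr (2*l)) \<partial>M)
                  \<le> ennreal (1 * (1 + (norm x0 ^ (2*N) + norm p0 ^ (2*N)) * exp (- 1 * real k)))" for x0 p0 k
            by simp
        qed simp_all
      next
        case True
        then obtain M0 :: "'w measure" and f :: "'w \<Rightarrow> real^'n" where
          M0: "prob_space M0" "distributed M0 lborel f (\<lambda>x. ennreal (std_gauss_density x))" by blast
        have one: "(\<integral>\<^sup>+ v. ennreal (std_gauss_density v) \<partial>(lborel :: (real^'n) measure)) = 1"
          by (rule gauss_total[OF M0])
        have hfin: "(\<integral>\<^sup>+ v. ennreal (std_gauss_density v) * ennreal (h v) \<partial>(lborel :: (real^'n) measure)) < \<infinity>"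
          unfolding h_def by (rule h_fin[OF one N1 q b e])
        define gh where "gh = enn2real (\<integral>\<^sup>+ v. ennreal (std_gauss_density v) * ennreal (h v) \<partial>(lborel :: (real^'n) measure))"
        have ghe: "(\<integral>\<^sup>+ v. ennreal (std_gauss_density v) * ennreal (h v) \<partial>(lborel :: (real^'n) measure)) = ennreal gh"
          using hfin by (simp add: gh_def)
        have gh0: "0 \<le> gh" by (simp add: gh_def)
        define a0 where "a0 = max (8/\<gamma>^2) 4"
        have a0: "a0 > 0" by (simp add: a0_def)
        define Kc where "Kc = 3^N * (U.K1^N + U.K2^N)"
        have Kc: "Kc \<ge> 0" using U.K_pos by (simp add: Kc_def)
        define C where "C = 2 + 2*a0^N*gh/(1-q) + 2*a0^N*Kc"
        have Cp: "C > 0" using a0 Kc gh0 q by (simp add: C_def add_pos_nonneg)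
        define lam where "lam = - ln q"
        have lam: "lam > 0" using q by (simp add: lam_def)
        show ?thesis
        proof -
          have main: "(\<integral>\<^sup>+ w. ennreal (norm (fst (ula \<gamma> \<delta> gradV x0 p0 \<eta> k w)) powr (2*l)
                               + norm (snd (ula \<gamma> \<delta> gradV x0 p0 \<eta> k w)) powr (2*l)) \<partial>M)
                  \<le> ennreal (C * (1 + (norm x0 ^ (2*N) + norm p0 ^ (2*N)) * exp (- lam * real k)))"
            if P: "prob_space M"
            and D: "\<forall>k. distributed M lborel (\<eta> k) (\<lambda>x. ennreal (std_gauss_density x))"
            for M :: "'w measure" and \<eta> :: "nat \<Rightarrow> 'w \<Rightarrow> real^'n" and x0 p0 :: "real^'n" and k :: nat
          proof -
          have m: "\<And>k. \<eta> k \<in> borel_measurable M"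
            using D distributed_measurable measurable_lborel1 by blast
          have K: "\<And>k. (\<integral>\<^sup>+ w. ennreal (h (\<eta> k w)) \<partial>M) = ennreal gh"
            using nn_dist[OF D[rule_format] hm] ghe by simp
          define R0 where "R0 = U.Lf x0 p0 ^ N"
          have R0: "0 \<le> R0" using U.Lf_nonneg by (simp add: R0_def)
          have EI: "(\<integral>\<^sup>+ w. ennreal (Rseq q R0 h \<eta> k w) \<partial>M) \<le> ennreal (q^k * R0 + gh/(1-q))"
            by (rule Rseq_int[OF P m hm hn q R0 gh0 K])
          have Rn: "\<And>w. 0 \<le> Rseq q R0 h \<eta> k w" using q R0 hn by (intro Rseq_nonneg) auto
          have Rm: "Rseq q R0 h \<eta> k \<in> borel_measurable M" by (rule Rseq_meas[OF m hm])
          have pw: "norm (fst (ula \<gamma> \<delta> gradV x0 p0 \<eta> k w)) powr (2*l)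
                     + norm (snd (ula \<gamma> \<delta> gradV x0 p0 \<eta> k w)) powr (2*l)
                    \<le> 2 + 2*a0^N * Rseq q R0 h \<eta> k w" for w
          proof -
            define x where "x = fst (ula \<gamma> \<delta> gradV x0 p0 \<eta> k w)"
            define p where "p = snd (ula \<gamma> \<delta> gradV x0 p0 \<eta> k w)"
            have LR: "U.Lf x p ^ N \<le> Rseq q R0 h \<eta> k w"
              using U.path_bound[OF q b e Nev Ct, of x0 p0 \<eta> k w]
              unfolding x_def p_def R0_def h_def by simp
            have L0: "0 \<le> U.Lf x p" by (rule U.Lf_nonneg)
            have xb: "x \<bullet> x \<le> a0 * U.Lf x p"
            proof -
              have "\<gamma>^2/8 * (x \<bullet> x) \<le> U.Lf x p" by (rule U.Lf_lowX)
              then have "x \<bullet> x \<le> 8/\<gamma>^2 * U.Lf x p" using gamma_pos by (simp add: field_simps)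
              also have "\<dots> \<le> a0 * U.Lf x p" using L0 by (intro mult_right_mono) (auto simp: a0_def)
              finally show ?thesis .
            qed
            have pb: "p \<bullet> p \<le> a0 * U.Lf x p"
            proof -
              have "p \<bullet> p \<le> 4 * U.Lf x p" by (rule U.Lf_lowP)
              also have "\<dots> \<le> a0 * U.Lf x p" using L0 by (intro mult_right_mono) (auto simp: a0_def)
              finally show ?thesis .
            qed
            have nx: "norm x ^ (2*N) \<le> a0^N * U.Lf x p ^ N"
            proof -
              have "norm x ^ (2*N) = (x \<bullet> x)^N" by (simp add: power_mult power2_norm_eq_inner)
              also have "\<dots> \<le> (a0 * U.Lf x p)^N" using xb by (intro power_mono) auto
              finally show ?thesis by (simp add: power_mult_distrib)
            qed
            have np: "norm p ^ (2*N) \<le> a0^N * U.Lf x p ^ N"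
            proof -
              have "norm p ^ (2*N) = (p \<bullet> p)^N" by (simp add: power_mult power2_norm_eq_inner)
              also have "\<dots> \<le> (a0 * U.Lf x p)^N" using pb by (intro power_mono) auto
              finally show ?thesis by (simp add: power_mult_distrib)
            qed
            have "norm x powr (2*l) + norm p powr (2*l) \<le> (1 + norm x ^ (2*N)) + (1 + norm p ^ (2*N))"
              using powr_bound[OF _ l lN] by (intro add_mono) auto
            also have "\<dots> \<le> 2 + 2*a0^N * U.Lf x p ^ N" using nx np by simp
            also have "\<dots> \<le> 2 + 2*a0^N * Rseq q R0 h \<eta> k w" using LR a0 by simp
            finally show ?thesis unfolding x_def p_def .
          qed
          have "(\<integral>\<^sup>+ w. ennreal (norm (fst (ula \<gamma> \<delta> gradV x0 p0 \<eta> k w)) powr (2*l)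
                               + norm (snd (ula \<gamma> \<delta> gradV x0 p0 \<eta> k w)) powr (2*l)) \<partial>M)
              \<le> (\<integral>\<^sup>+ w. ennreal 2 + ennreal (2*a0^N) * ennreal (Rseq q R0 h \<eta> k w) \<partial>M)"
          proof (intro nn_integral_mono)
            fix w
            have "ennreal (norm (fst (ula \<gamma> \<delta> gradV x0 p0 \<eta> k w)) powr (2*l)
                               + norm (snd (ula \<gamma> \<delta> gradV x0 p0 \<eta> k w)) powr (2*l))
                \<le> ennreal (2 + 2*a0^N * Rseq q R0 h \<eta> k w)" using pw by (rule ennreal_leI)
            also have "\<dots> = ennreal 2 + ennreal (2*a0^N) * ennreal (Rseq q R0 h \<eta> k w)"
              using a0 Rn by (simp add: ennreal_plus ennreal_mult)
            finally show "ennreal (norm (fst (ula \<gamma> \<delta> gradV x0 p0 \<eta> k w)) powr (2*l)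
                               + norm (snd (ula \<gamma> \<delta> gradV x0 p0 \<eta> k w)) powr (2*l))
                \<le> ennreal 2 + ennreal (2*a0^N) * ennreal (Rseq q R0 h \<eta> k w)" .
          qed
          also have "\<dots> = ennreal 2 + ennreal (2*a0^N) * (\<integral>\<^sup>+ w. ennreal (Rseq q R0 h \<eta> k w) \<partial>M)"
            using Rm P by (simp add: nn_integral_add nn_integral_cmult prob_space.emeasure_space_1)
          also have "\<dots> \<le> ennreal 2 + ennreal (2*a0^N) * ennreal (q^k * R0 + gh/(1-q))"
            using EI by (intro add_mono mult_left_mono) auto
          also have "\<dots> = ennreal (2 + 2*a0^N * (q^k * R0 + gh/(1-q)))"
            using a0 R0 gh0 q by (simp add: ennreal_plus ennreal_mult)
          also have "\<dots> \<le> ennreal (C * (1 + (norm x0 ^ (2*N) + norm p0 ^ (2*N)) * exp (- lam * real k)))"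
          proof (rule ennreal_leI)
            define Z where "Z = norm x0 ^ (2*N) + norm p0 ^ (2*N)"
            have Z: "0 \<le> Z" by (simp add: Z_def)
            have ex: "exp (- lam * real k) = q^k"
            proof -
              have "exp (- lam * real k) = exp (real k * ln q)" by (simp add: lam_def)
              also have "\<dots> = exp (ln q) ^ k" by (rule exp_of_nat_mult)
              finally show ?thesis using q by simp
            qed
            have qk: "0 \<le> q^k" "q^k \<le> 1" using q by (simp_all add: power_le_one)
            have R0b: "R0 \<le> Kc * (1 + Z)"
            proof -
              have "U.Lf x0 p0 \<le> U.K1 + U.K2*(x0 \<bullet> x0) + U.K2*(p0 \<bullet> p0)" by (rule U.Lf_up)
              then have "R0 \<le> (U.K1 + U.K2*(x0 \<bullet> x0) + U.K2*(p0 \<bullet> p0))^N"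
                unfolding R0_def using U.Lf_nonneg by (intro power_mono) auto
              also have "\<dots> \<le> 3^N * (U.K1^N + (U.K2*(x0 \<bullet> x0))^N + (U.K2*(p0 \<bullet> p0))^N)"
                using U.K_pos by (intro pow3) auto
              also have "(U.K2*(x0 \<bullet> x0))^N = U.K2^N * norm x0 ^ (2*N)"
                by (simp add: power_mult_distrib power_mult power2_norm_eq_inner)
              also have "(U.K2*(p0 \<bullet> p0))^N = U.K2^N * norm p0 ^ (2*N)"
                by (simp add: power_mult_distrib power_mult power2_norm_eq_inner)
              also have "3^N * (U.K1^N + U.K2^N * norm x0 ^ (2*N) + U.K2^N * norm p0 ^ (2*N))
                  \<le> Kc * (1 + Z)"
              proof -
                have k1: "0 \<le> U.K1^N" "0 \<le> U.K2^N" using U.K_pos by auto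
                have "U.K1^N + U.K2^N * norm x0 ^ (2*N) + U.K2^N * norm p0 ^ (2*N)
                    \<le> (U.K1^N + U.K2^N) * (1 + Z)"
                  using k1 unfolding Z_def
                  by (simp add: algebra_simps add_nonneg_nonneg)
                then show ?thesis unfolding Kc_def by simp
              qed
              finally show ?thesis .
            qed
            have "2*a0^N * (q^k * R0) \<le> 2*a0^N * (q^k * (Kc * (1 + Z)))"
              using R0b qk a0 by (intro mult_left_mono) auto
            also have "\<dots> = 2*a0^N*Kc*q^k + 2*a0^N*Kc*Z*q^k" by (simp add: algebra_simps)
            also have "2*a0^N*Kc*q^k \<le> 2*a0^N*Kc" using qk a0 Kc
              by (simp add: mult_left_le)
            also have "2*a0^N*Kc*Z*q^k \<le> C*Z*q^k"
            proof -
              have t: "0 \<le> 2*a0^N*gh/(1-q)" using a0 gh0 q by simp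
              have Cge: "2*a0^N*Kc \<le> C" unfolding C_def using t by linarith
              have "0 \<le> Z*q^k" using Z qk by simp
              from mult_right_mono[OF Cge this] show ?thesis by (simp add: mult.assoc)
            qed
            finally have "2*a0^N * (q^k * R0) \<le> 2*a0^N*Kc + C*Z*q^k" by simp
            moreover have "2 + 2*a0^N * (q^k * R0 + gh/(1-q)) = 2 + 2*a0^N*gh/(1-q) + 2*a0^N * (q^k * R0)"
              by (simp add: algebra_simps)
            moreover have "C * (1 + Z * q^k) = C + C*Z*q^k" by (simp add: algebra_simps)
            moreover have "C = 2 + 2*a0^N*gh/(1-q) + 2*a0^N*Kc" by (simp add: C_def)
            ultimately show "2 + 2*a0^N * (q^k * R0 + gh/(1-q)) \<le> C * (1 + Z * exp (- lam * real k))"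
              unfolding ex by linarith
          qed
          finally show "(\<integral>\<^sup>+ w. ennreal (norm (fst (ula \<gamma> \<delta> gradV x0 p0 \<eta> k w)) powr (2*l)
                               + norm (snd (ula \<gamma> \<delta> gradV x0 p0 \<eta> k w)) powr (2*l)) \<partial>M)
                  \<le> ennreal (C * (1 + (norm x0 ^ (2*N) + norm p0 ^ (2*N)) * exp (- lam * real k)))" .
          qed
          show ?thesis using Cp lam main by blast
        qed
      qed
    qed
  qed
qed

end
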